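(* Assume $U_1>2U_2$, $0<\varepsilon\ll U_2$ and $U_2/\varepsilon\notin\mathbb N$. Let $(\bar\eta,\eta)$ be a move with $\bar\eta\in\mathcal B$. If $\Delta s:=s(\eta)-s(\bar\eta)=-1$ and $p_2(\bar\eta)\ge\ell_2^*$, then one of the following holds: (i) $\eta\in\mathcal B$; (ii) $\bar\eta\in\mathcal P_1$, $H(\bar\eta)=\Gamma$ and $\eta\in\mathcal B$; (iii) $\eta\notin\mathcal B$ and $\max\{H(\bar\eta),H(\eta)\}>\Gamma$, with $\bar\eta\notin\mathcal P_1\cup\mathcal P_2$.
   Context: Let $L\in\mathbb N$, $\Lambda=\{0,\dots,L\}^2$, $\partial^-\Lambda=\{x\in\Lambda:\exists y\notin\Lambda,\ |y-x|=1\}$, $\Lambda_0=\Lambda\setminus\partial^-\Lambda$, configurations $\eta\in\{0,1\}^\Lambda$ with energy $H(\eta)=-U_1\sum_{(x,y)\in\Lambda^*_{0,h}}\eta(x)\eta(y)-U_2\sum_{(x,y)\in\Lambda^*_{0,v}}\eta(x)\eta(y)+\Delta\sum_{x\in\Lambda}\eta(x)$, with $\Lambda^*_{0,h}$ ($\Lambda^*_{0,v}$) the horizontal (vertical) unoriented nearest-neighbour bonds inside $\Lambda_0$, $U_1,U_2,\Delta>0$. $\varepsilon=U_1+U_2-\Delta$, $\ell_2^*=\lceil U_2/\varepsilon\rceil$, $s^*=3\ell_2^*-1$, $\Gamma=U_1\ell_2^*+2U_2\ell_2^*+U_1-U_2-2\varepsilon(\ell_2^* )^2+3\varepsilon\ell_2^*-2\varepsilon$.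 A move is a pair $(\bar\eta,\eta)$ with $\eta\ne\bar\eta$ obtained from $\bar\eta$ by exchanging the values at two nearest-neighbour sites of $\Lambda$, or by setting the value at some site of $\partial^-\Lambda$ to $0$, or setting it to $1$. Geometry: a free particle is an occupied site in $\partial^-\Lambda$ or an occupied site of $\Lambda_0$ with no occupied nearest neighbour in $\Lambda_0$; $n(\eta)$ is the number of free particles; $\eta_{cl}$ is the set of occupied sites of $\Lambda_0$ that are not free. $C(\eta_{cl})$ is the union of closed unit squares centred at sites of $\eta_{cl}$; $g_1$ ($g_2$) is half the horizontal (vertical) length of $\partial C(\eta_{cl})$; $p_1$ ($p_2$) is the number of columns (rows) of $\mathbb Z^2$ meeting $C(\eta_{cl})$; $g_i'=g_i-p_i$; monotone means $g_1'=g_2'=0$; $s=p_1+p_2$; $v=p_1p_2-|\eta_{cl}|$; $p_{min}=\min\{p_1,p_2\}$, $p_{max}=\max\{p_1,p_2\}$. The circumscribed rectangle of $\eta_{cl}$ has horizontal side $p_1$, vertical side $p_2$. $\mathcal P_1$: configurations with $n=0$, $v=2\ell_2^*-2$, $\eta_{cl}$ connected, $g_1'=0$, $g_2'=1$, circumscribed rectangle of horizontal side $2\ell_2^*-1$ and vertical side $\ell_2^*$. $\mathcal P_2$: configurations with $n=1$, $v=\ell_2^*-1$, $\eta_{cl}$ connected and monotone, circumscribed rectangle of horizontal side $2\ell_2^*-2$ and vertical side $\ell_2^*$. $\mathcal B$ is the set of $\eta$ such that: $s(\eta)\le s^*-2$; or $s(\eta)\ge s^*-1$ and $p_2(\eta)\le\ell_2^*-1$;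 or $s(\eta)=s^*-1$, $p_2(\eta)\ge\ell_2^*$ and $v(\eta)\ge p_{min}(\eta)-1$; or $s(\eta)\ge s^*$, $p_2(\eta)=\ell_2^*$ and $v(\eta)\ge p_{max}(\eta)-1$. *)

theory Defs
  imports "HOL-Analysis.Analysis"
begin

type_synonym site = "int \<times> int"
type_synonym config = "site set"   \<comment> \<open>set of occupied sites; a configuration is a subset of Lambda\<close>

definition Lam :: "nat \<Rightarrow> site set" where
  "Lam L = {0..int L} \<times> {0..int L}"

definition nbr :: "site \<Rightarrow> site \<Rightarrow> bool" where
  "nbr x y \<longleftrightarrow> \<bar>fst x - fst y\<bar> + \<bar>snd x - snd y\<bar> = 1"

definition bdry :: "nat \<Rightarrow> site set" where
  "bdry L = {x \<in> Lam L. \<exists>y. y \<notin> Lam L \<and> nbr x y}"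

definition Lam0 :: "nat \<Rightarrow> site set" where
  "Lam0 L = Lam L - bdry L"

definition hbonds :: "nat \<Rightarrow> config \<Rightarrow> nat" where
  "hbonds L \<eta> = card {x. x \<in> Lam0 L \<and> (fst x + 1, snd x) \<in> Lam0 L \<and> x \<in> \<eta> \<and> (fst x + 1, snd x) \<in> \<eta>}"

definition vbonds :: "nat \<Rightarrow> config \<Rightarrow> nat" where
  "vbonds L \<eta> = card {x. x \<in> Lam0 L \<and> (fst x, snd x + 1) \<in> Lam0 L \<and> x \<in> \<eta> \<and> (fst x, snd x + 1) \<in> \<eta>}"

definition H :: "nat \<Rightarrow> real \<Rightarrow> real \<Rightarrow> real \<Rightarrow> config \<Rightarrow> real" where
  "H L U1 U2 \<Delta> \<eta> = - U1 * real (hbonds L \<eta>) - U2 * real (vbonds L \<eta>) + \<Delta> * real (card (\<eta> \<inter> Lam L))"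

definition eps :: "real \<Rightarrow> real \<Rightarrow> real \<Rightarrow> real" where
  "eps U1 U2 \<Delta> = U1 + U2 - \<Delta>"

definition lstar :: "real \<Rightarrow> real \<Rightarrow> real \<Rightarrow> nat" where
  "lstar U1 U2 \<Delta> = nat \<lceil>U2 / eps U1 U2 \<Delta>\<rceil>"

definition sstar :: "real \<Rightarrow> real \<Rightarrow> real \<Rightarrow> int" where
  "sstar U1 U2 \<Delta> = 3 * int (lstar U1 U2 \<Delta>) - 1"

definition Gamma :: "real \<Rightarrow> real \<Rightarrow> real \<Rightarrow> real" where
  "Gamma U1 U2 \<Delta> = (let l = real (lstar U1 U2 \<Delta>); e = eps U1 U2 \<Delta> in
     U1 * l + 2 * U2 * l + U1 - U2 - 2 * e * l\<^sup>2 + 3 * e * l - 2 * e)"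

definition swap :: "site \<Rightarrow> site \<Rightarrow> config \<Rightarrow> config" where
  "swap x y \<eta> = (\<eta> - {x, y}) \<union> (if x \<in> \<eta> then {y} else {}) \<union> (if y \<in> \<eta> then {x} else {})"

definition is_move :: "nat \<Rightarrow> config \<Rightarrow> config \<Rightarrow> bool" where
  "is_move L \<eta>b \<eta> \<longleftrightarrow> \<eta>b \<subseteq> Lam L \<and> \<eta> \<noteq> \<eta>b \<and>
     ((\<exists>x y. x \<in> Lam L \<and> y \<in> Lam L \<and> nbr x y \<and> \<eta> = swap x y \<eta>b)
      \<or> (\<exists>x \<in> bdry L. \<eta> = \<eta>b - {x})
      \<or> (\<exists>x \<in> bdry L. \<eta> = insert x \<eta>b))"

definition free_particles :: "nat \<Rightarrow> config \<Rightarrow> site set" where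
  "free_particles L \<eta> = {x \<in> \<eta> \<inter> Lam L. x \<in> bdry L \<or>
      (x \<in> Lam0 L \<and> \<not> (\<exists>y \<in> \<eta> \<inter> Lam0 L. nbr x y))}"

definition nfree :: "nat \<Rightarrow> config \<Rightarrow> nat" where
  "nfree L \<eta> = card (free_particles L \<eta>)"

definition cl :: "nat \<Rightarrow> config \<Rightarrow> site set" where
  "cl L \<eta> = {x \<in> \<eta> \<inter> Lam0 L. \<exists>y \<in> \<eta> \<inter> Lam0 L. nbr x y}"

definition Csq :: "site set \<Rightarrow> (real \<times> real) set" where
  "Csq A = (\<Union>a\<in>A. cbox (real_of_int (fst a) - 1/2, real_of_int (snd a) - 1/2)
                          (real_of_int (fst a) + 1/2, real_of_int (snd a) + 1/2))"

text \<open>Horizontal (vertical) length of the boundary of C(A): number of horizontal (vertical) unit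
  edges separating a site of A from a vertically (horizontally) adjacent site not in A.\<close>
definition hlen :: "site set \<Rightarrow> nat" where
  "hlen A = card {x \<in> A. (fst x, snd x + 1) \<notin> A} + card {x \<in> A. (fst x, snd x - 1) \<notin> A}"

definition vlen :: "site set \<Rightarrow> nat" where
  "vlen A = card {x \<in> A. (fst x + 1, snd x) \<notin> A} + card {x \<in> A. (fst x - 1, snd x) \<notin> A}"

definition g1 :: "site set \<Rightarrow> real" where "g1 A = real (hlen A) / 2"
definition g2 :: "site set \<Rightarrow> real" where "g2 A = real (vlen A) / 2"

definition p1 :: "site set \<Rightarrow> nat" where "p1 A = card (fst ` A)"
definition p2 :: "site set \<Rightarrow> nat" where "p2 A = card (snd ` A)"

definition g1' :: "site set \<Rightarrow> real" where "g1' A = g1 A - real (p1 A)"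
definition g2' :: "site set \<Rightarrow> real" where "g2' A = g2 A - real (p2 A)"

definition monotone :: "site set \<Rightarrow> bool" where
  "monotone A \<longleftrightarrow> g1' A = 0 \<and> g2' A = 0"

definition ssz :: "site set \<Rightarrow> int" where "ssz A = int (p1 A) + int (p2 A)"
definition vac :: "site set \<Rightarrow> int" where "vac A = int (p1 A) * int (p2 A) - int (card A)"
definition pmin :: "site set \<Rightarrow> int" where "pmin A = int (min (p1 A) (p2 A))"
definition pmax :: "site set \<Rightarrow> int" where "pmax A = int (max (p1 A) (p2 A))"

definition cl_connected :: "site set \<Rightarrow> bool" where
  "cl_connected A \<longleftrightarrow> connected (Csq A)"

definition P1 :: "nat \<Rightarrow> nat \<Rightarrow> config set" where
  "P1 L l = {\<eta>. \<eta> \<subseteq> Lam L \<and> nfree L \<eta> = 0 \<and> vac (cl L \<eta>) = 2 * int l - 2 \<and>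
     cl_connected (cl L \<eta>) \<and> g1' (cl L \<eta>) = 0 \<and> g2' (cl L \<eta>) = 1 \<and>
     p1 (cl L \<eta>) = 2 * l - 1 \<and> p2 (cl L \<eta>) = l}"

definition P2 :: "nat \<Rightarrow> nat \<Rightarrow> config set" where
  "P2 L l = {\<eta>. \<eta> \<subseteq> Lam L \<and> nfree L \<eta> = 1 \<and> vac (cl L \<eta>) = int l - 1 \<and>
     cl_connected (cl L \<eta>) \<and> monotone (cl L \<eta>) \<and>
     p1 (cl L \<eta>) = 2 * l - 2 \<and> p2 (cl L \<eta>) = l}"

definition Bset :: "nat \<Rightarrow> nat \<Rightarrow> config set" where
  "Bset L l = {\<eta>. let A = cl L \<eta>; s = ssz A; ss = 3 * int l - 1 in
      s \<le> ss - 2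
    \<or> (s \<ge> ss - 1 \<and> int (p2 A) \<le> int l - 1)
    \<or> (s = ss - 1 \<and> p2 A \<ge> l \<and> vac A \<ge> pmin A - 1)
    \<or> (s \<ge> ss \<and> p2 A = l \<and> vac A \<ge> pmax A - 1)}"

end

theory Submission
  imports Defs
begin

definition Ed :: "int \<Rightarrow> site set \<Rightarrow> site set" where
  "Ed d A = {z\<in>A. (fst z + d, snd z) \<notin> A}"
definition Ev :: "site set \<Rightarrow> site set" where
  "Ev A = {z\<in>A. (fst z, snd z + 1) \<notin> A}"
definition hb :: "site set \<Rightarrow> nat" where
  "hb A = card {z\<in>A. (fst z + 1, snd z) \<in> A}"
definition vb :: "site set \<Rightarrow> nat" where
  "vb A = card {z\<in>A. (fst z, snd z + 1) \<in> A}"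

lemma card_split: "finite A \<Longrightarrow> card A = card {z\<in>A. P z} + card {z\<in>A. \<not> P z}"
proof -
  assume f: "finite A"
  have e: "A = {z\<in>A. P z} \<union> {z\<in>A. \<not> P z}" by blast
  have "card ({z\<in>A. P z} \<union> {z\<in>A. \<not> P z}) = card {z\<in>A. P z} + card {z\<in>A. \<not> P z}"
    by (rule card_Un_disjoint) (use f in auto)
  then show ?thesis using e by simp
qed

lemma card_hb: "finite A \<Longrightarrow> card A = hb A + card (Ed 1 A)"
  unfolding hb_def Ed_def by (rule card_split)

lemma card_vb: "finite A \<Longrightarrow> card A = vb A + card (Ev A)"
  unfolding vb_def Ev_def by (rule card_split)

lemma card_Ed_m1: "finite A \<Longrightarrow> card (Ed (-1) A) = card (Ed 1 A)"
proof -
  assume f: "finite A"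
  have C: "{z\<in>A. (fst z - 1, snd z) \<in> A} = (\<lambda>z. (fst z + 1, snd z)) ` {z\<in>A. (fst z + 1, snd z) \<in> A}"
  proof (rule set_eqI, rule iffI)
    fix z assume "z \<in> {z\<in>A. (fst z - 1, snd z) \<in> A}"
    then show "z \<in> (\<lambda>z. (fst z + 1, snd z)) ` {z\<in>A. (fst z + 1, snd z) \<in> A}"
      by (intro image_eqI[of _ _ "(fst z - 1, snd z)"]) auto
  qed auto
  have D: "inj_on (\<lambda>z::site. (fst z + 1, snd z)) X" for X
    by (auto simp: inj_on_def prod_eq_iff)
  have "card {z\<in>A. (fst z - 1, snd z) \<in> A} = hb A" unfolding C hb_def
    using card_image[OF D] by blast
  moreover have "card A = card {z\<in>A. (fst z - 1, snd z) \<in> A} + card (Ed (-1) A)"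
    unfolding Ed_def using card_split[OF f, of "\<lambda>z. (fst z - 1, snd z) \<in> A"] by simp
  ultimately show ?thesis using card_hb[OF f] by simp
qed

lemma rows_le: "finite A \<Longrightarrow> card (snd ` A) \<le> card (Ed 1 A)"
proof -
  assume f: "finite A"
  define g where "g k = (Max (fst ` {z\<in>A. snd z = k}), k)" for k
  have gin: "g k \<in> Ed 1 A" if "k \<in> snd ` A" for k
  proof -
    have ne: "fst ` {z\<in>A. snd z = k} \<noteq> {}" using that by auto
    have fi: "finite (fst ` {z\<in>A. snd z = k})" using f by auto
    have "Max (fst ` {z\<in>A. snd z = k}) \<in> fst ` {z\<in>A. snd z = k}" using Max_in[OF fi ne] .
    then have "g k \<in> A" unfolding g_def by auto
    moreover have "(fst (g k) + 1, snd (g k)) \<notin> A"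
    proof
      assume "(fst (g k) + 1, snd (g k)) \<in> A"
      then have "fst (g k) + 1 \<in> fst ` {z\<in>A. snd z = k}" unfolding g_def by force
      then have "fst (g k) + 1 \<le> Max (fst ` {z\<in>A. snd z = k})" using fi by simp
      then show False unfolding g_def by simp
    qed
    ultimately show ?thesis by (simp add: Ed_def)
  qed
  have inj: "inj_on g (snd ` A)" by (auto simp: inj_on_def g_def)
  have sub: "g ` (snd ` A) \<subseteq> Ed 1 A" using gin by blast
  have fin: "finite (Ed 1 A)" using f by (simp add: Ed_def)
  show ?thesis using card_inj_on_le[OF inj sub fin] .
qed

lemma cols_le: "finite A \<Longrightarrow> card (fst ` A) \<le> card (Ev A)"
proof -
  assume f: "finite A"
  define g where "g k = (k, Max (snd ` {z\<in>A. fst z = k}))" for k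
  have gin: "g k \<in> Ev A" if "k \<in> fst ` A" for k
  proof -
    have ne: "snd ` {z\<in>A. fst z = k} \<noteq> {}" using that by auto
    have fi: "finite (snd ` {z\<in>A. fst z = k})" using f by auto
    have "Max (snd ` {z\<in>A. fst z = k}) \<in> snd ` {z\<in>A. fst z = k}" using Max_in[OF fi ne] .
    then have "g k \<in> A" unfolding g_def by auto
    moreover have "(fst (g k), snd (g k) + 1) \<notin> A"
    proof
      assume "(fst (g k), snd (g k) + 1) \<in> A"
      then have "snd (g k) + 1 \<in> snd ` {z\<in>A. fst z = k}" unfolding g_def by force
      then have "snd (g k) + 1 \<le> Max (snd ` {z\<in>A. fst z = k})" using fi by simp
      then show False unfolding g_def by simp
    qed
    ultimately show ?thesis by (simp add: Ev_def)
  qed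
  have inj: "inj_on g (fst ` A)" by (auto simp: inj_on_def g_def)
  have sub: "g ` (fst ` A) \<subseteq> Ev A" using gin by blast
  have fin: "finite (Ev A)" using f by (simp add: Ev_def)
  show ?thesis using card_inj_on_le[OF inj sub fin] .
qed

lemma ex_argmax:
  fixes f :: "'a \<Rightarrow> int"
  assumes "finite X" "X \<noteq> {}"
  shows "\<exists>z\<in>X. \<forall>z'\<in>X. f z' \<le> f z"
proof -
  have "Max (f ` X) \<in> f ` X" using assms by simp
  then obtain z where z: "z \<in> X" "f z = Max (f ` X)" by force
  have "\<forall>z'\<in>X. f z' \<le> f z" using assms z by simp
  then show ?thesis using z by blast
qed

lemma struct_runs:
  fixes A :: "site set" and c j d :: int
  assumes fin: "finite A" and dd: "d = 1 \<or> d = -1"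
    and pA: "(c,j) \<in> A" and alone: "\<forall>z\<in>A. fst z = c \<longrightarrow> z = (c,j)"
    and qn: "(c - d, j) \<notin> A" and wA: "(c + d, j) \<in> A"
  shows "card (snd ` A) + card (snd ` {z\<in>A. d * (fst z - c) < 0} \<inter> snd ` {z\<in>A. d * (fst z - c) > 0})
           \<le> card (Ed d A)"
proof -
  define Y where "Y = {z\<in>A. d * (fst z - c) < 0}"
  define W where "W = {z\<in>A. d * (fst z - c) > 0}"
  define S where "S = snd ` Y \<inter> snd ` W"
  have d2: "d * d = 1" using dd by auto
  define gm where "gm k = (SOME z. z \<in> A \<and> snd z = k \<and> (\<forall>z'\<in>A. snd z' = k \<longrightarrow> d * fst z' \<le> d * fst z))" for k
  define ym where "ym k = (SOME z. z \<in> Y \<and> snd z = k \<and> (\<forall>z'\<in>Y. snd z' = k \<longrightarrow> d * fst z' \<le> d * fst z))" for k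
  have gm: "gm k \<in> A \<and> snd (gm k) = k \<and> (\<forall>z'\<in>A. snd z' = k \<longrightarrow> d * fst z' \<le> d * fst (gm k))"
    if "k \<in> snd ` A" for k
  proof -
    have "\<exists>z\<in>{z\<in>A. snd z = k}. \<forall>z'\<in>{z\<in>A. snd z = k}. d * fst z' \<le> d * fst z"
      by (rule ex_argmax) (use fin that in auto)
    then have "\<exists>z. z \<in> A \<and> snd z = k \<and> (\<forall>z'\<in>A. snd z' = k \<longrightarrow> d * fst z' \<le> d * fst z)" by blast
    then show ?thesis unfolding gm_def by (rule someI_ex)
  qed
  have ym: "ym k \<in> Y \<and> snd (ym k) = k \<and> (\<forall>z'\<in>Y. snd z' = k \<longrightarrow> d * fst z' \<le> d * fst (ym k))"
    if "k \<in> snd ` Y" for k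
  proof -
    have "\<exists>z\<in>{z\<in>Y. snd z = k}. \<forall>z'\<in>{z\<in>Y. snd z = k}. d * fst z' \<le> d * fst z"
      by (rule ex_argmax) (use fin that in \<open>auto simp: Y_def\<close>)
    then have "\<exists>z. z \<in> Y \<and> snd z = k \<and> (\<forall>z'\<in>Y. snd z' = k \<longrightarrow> d * fst z' \<le> d * fst z)" by blast
    then show ?thesis unfolding ym_def by (rule someI_ex)
  qed
  have gmE: "gm k \<in> Ed d A" if "k \<in> snd ` A" for k
  proof -
    note g = gm[OF that]
    have "(fst (gm k) + d, snd (gm k)) \<notin> A"
    proof
      assume "(fst (gm k) + d, snd (gm k)) \<in> A"
      have h: "\<forall>z'\<in>A. snd z' = k \<longrightarrow> d * fst z' \<le> d * fst (gm k)" using g by blast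
      have "d * fst (fst (gm k) + d, snd (gm k)) \<le> d * fst (gm k)" using h[rule_format, OF \<open>(fst (gm k) + d, snd (gm k)) \<in> A\<close>] g by simp
      then have "d * (fst (gm k) + d) \<le> d * fst (gm k)" by simp
      then show False using d2 by (simp add: algebra_simps)
    qed
    then show ?thesis using g by (simp add: Ed_def)
  qed
  have ymE: "ym k \<in> Ed d A" if "k \<in> snd ` Y" for k
  proof -
    note g = ym[OF that]
    have yA: "ym k \<in> A" and yneg: "d * (fst (ym k) - c) < 0" using g by (auto simp: Y_def)
    have "(fst (ym k) + d, snd (ym k)) \<notin> A"
    proof
      assume a: "(fst (ym k) + d, snd (ym k)) \<in> A"
      have e: "d * (fst (ym k) + d - c) = d * (fst (ym k) - c) + 1" using d2 by (simp add: algebra_simps)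
      show False
      proof (cases "d * (fst (ym k) - c) + 1 < 0")
        case True
        then have "(fst (ym k) + d, snd (ym k)) \<in> Y" using a e by (simp add: Y_def)
        have h: "\<forall>z'\<in>Y. snd z' = k \<longrightarrow> d * fst z' \<le> d * fst (ym k)" using g by blast
        have "d * fst (fst (ym k) + d, snd (ym k)) \<le> d * fst (ym k)" using h[rule_format, OF \<open>(fst (ym k) + d, snd (ym k)) \<in> Y\<close>] g by simp
        then have "d * (fst (ym k) + d) \<le> d * fst (ym k)" by simp
        then show False using d2 by (simp add: algebra_simps)
      next
        case False
        then have z: "d * (fst (ym k) - c) = -1" using yneg by simp
        then have "fst (ym k) + d = c" using dd by (elim disjE) simp_all
        then have "(fst (ym k) + d, snd (ym k)) = (c, j)" using alone a by auto
        then have "snd (ym k) = j" by simp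
        moreover have "fst (ym k) = c - d" using z dd by (elim disjE) simp_all
        ultimately have "ym k = (c - d, j)" by (simp add: prod_eq_iff)
        then show False using yA qn by simp
      qed
    qed
    then show ?thesis using yA by (simp add: Ed_def)
  qed
  have gmW: "d * (fst (gm k) - c) > 0" if kS: "k \<in> S" for k
  proof -
    have "k \<in> snd ` W" using kS unfolding S_def by blast
    then obtain w where w: "w \<in> W" "snd w = k" by force
    have k: "k \<in> snd ` A" using w by (auto simp: W_def)
    have "w \<in> A" using w by (simp add: W_def)
    then have "d * fst w \<le> d * fst (gm k)" using gm[OF k] w by blast
    moreover have "d * (fst w - c) > 0" using w by (simp add: W_def)
    ultimately show ?thesis by (simp add: right_diff_distrib)
  qed
  define G1 where "G1 = gm ` (snd ` A)"
  define G2 where "G2 = ym ` S"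
  have inj1: "inj_on gm (snd ` A)"
  proof (rule inj_onI)
    fix a b assume ab: "a \<in> snd ` A" "b \<in> snd ` A" "gm a = gm b"
    have "snd (gm a) = a" using conjunct1[OF conjunct2[OF gm[OF ab(1)]]] .
    moreover have "snd (gm b) = b" using conjunct1[OF conjunct2[OF gm[OF ab(2)]]] .
    ultimately show "a = b" using ab(3) by metis
  qed
  have inj2: "inj_on ym S"
  proof (rule inj_onI)
    fix a b assume ab: "a \<in> S" "b \<in> S" "ym a = ym b"
    have a1: "a \<in> snd ` Y" "b \<in> snd ` Y" using ab unfolding S_def by simp_all
    have "snd (ym a) = a" using conjunct1[OF conjunct2[OF ym[OF a1(1)]]] .
    moreover have "snd (ym b) = b" using conjunct1[OF conjunct2[OF ym[OF a1(2)]]] .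
    ultimately show "a = b" using ab(3) by metis
  qed
  have c1: "card G1 = card (snd ` A)" unfolding G1_def using card_image[OF inj1] .
  have c2: "card G2 = card S" unfolding G2_def using card_image[OF inj2] .
  have disj: "G1 \<inter> G2 = {}"
  proof (rule ccontr)
    assume "G1 \<inter> G2 \<noteq> {}"
    then obtain k k' where k: "k \<in> snd ` A" "k' \<in> S" "gm k = ym k'" unfolding G1_def G2_def by blast
    have "k' \<in> snd ` Y" using k(2) by (simp add: S_def)
    then have "snd (ym k') = k'" "ym k' \<in> Y" using ym[OF \<open>k' \<in> snd ` Y\<close>] by blast+
    moreover have "snd (gm k) = k" using gm[OF k(1)] by blast
    ultimately have kk: "k = k'" using k by simp
    have "d * (fst (gm k) - c) > 0" using gmW[OF k(2)] kk by simp
    moreover have "d * (fst (gm k) - c) < 0" using \<open>ym k' \<in> Y\<close> k(3) by (simp add: Y_def)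
    ultimately show False by simp
  qed
  have sub: "G1 \<union> G2 \<subseteq> Ed d A"
    using gmE ymE unfolding G1_def G2_def S_def by blast
  have finE: "finite (Ed d A)" using fin by (simp add: Ed_def)
  have fG: "finite G1" "finite G2" using finite_subset[OF sub finE] by auto
  have "card (G1 \<union> G2) = card G1 + card G2" using card_Un_disjoint[OF fG disj] .
  moreover have "card (G1 \<union> G2) \<le> card (Ed d A)" using card_mono[OF finE sub] .
  ultimately show ?thesis using c1 c2 unfolding S_def Y_def W_def by simp
qed

lemma struct_count:
  fixes A :: "site set" and c j d :: int
  assumes fin: "finite A" and dd: "d = 1 \<or> d = -1"
    and pA: "(c,j) \<in> A" and alone: "\<forall>z\<in>A. fst z = c \<longrightarrow> z = (c,j)"
  defines "Y \<equiv> {z\<in>A. d * (fst z - c) < 0}" and "W \<equiv> {z\<in>A. d * (fst z - c) > 0}"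
  shows "card A \<le> card (fst`Y) * card (snd`Y) + card (fst`W) * card (snd`W) + 1"
    and "card (fst ` A) = card (fst`Y) + card (fst`W) + 1"
    and "j \<in> snd ` W \<Longrightarrow> card (snd`A) + card (snd`Y \<inter> snd`W) = card (snd`Y) + card (snd`W)"
    and "j \<in> snd ` Y \<Longrightarrow> c - d \<in> fst ` Y \<Longrightarrow> (c - d, j) \<notin> A \<Longrightarrow>
          card A \<le> card (fst`Y) * card (snd`Y) + card (fst`W) * card (snd`W)"
proof -
  have dnz: "d \<noteq> 0" using dd by auto
  have Aeq: "A = Y \<union> W \<union> {(c,j)}"
  proof (rule set_eqI, rule iffI)
    fix z assume z: "z \<in> A"
    show "z \<in> Y \<union> W \<union> {(c,j)}"
    proof (cases "d * (fst z - c) = 0")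
      case True
      then have "fst z = c" using dnz by simp
      then show ?thesis using alone z by blast
    next
      case False
      then show ?thesis using z unfolding Y_def W_def by (cases "d * (fst z - c) < 0") auto
    qed
  next
    fix z assume "z \<in> Y \<union> W \<union> {(c,j)}"
    then show "z \<in> A" using pA unfolding Y_def W_def by blast
  qed
  have fY: "finite Y" "finite W" using fin unfolding Y_def W_def by simp_all
  have sY: "Y \<subseteq> fst ` Y \<times> snd ` Y" by (auto intro: rev_image_eqI)
  have sW: "W \<subseteq> fst ` W \<times> snd ` W" by (auto intro: rev_image_eqI)
  have cY: "card Y \<le> card (fst`Y) * card (snd`Y)"
    using card_mono[OF _ sY] fY by (simp add: card_cartesian_product)
  have cW: "card W \<le> card (fst`W) * card (snd`W)"
    using card_mono[OF _ sW] fY by (simp add: card_cartesian_product)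
  have cA: "card A \<le> card Y + card W + 1"
  proof -
    have "card A \<le> card (Y \<union> W) + card {(c,j)}" using Aeq card_Un_le by metis
    also have "\<dots> \<le> card Y + card W + 1" using card_Un_le[of Y W] by simp
    finally show ?thesis .
  qed
  show "card A \<le> card (fst`Y) * card (snd`Y) + card (fst`W) * card (snd`W) + 1"
    using cA cY cW by linarith
  show "card (fst ` A) = card (fst`Y) + card (fst`W) + 1"
  proof -
    have e: "fst ` A = (fst ` Y \<union> fst ` W) \<union> {c}" using Aeq by auto
    have d1: "fst ` Y \<inter> fst ` W = {}" unfolding Y_def W_def by auto
    have d2: "(fst ` Y \<union> fst ` W) \<inter> {c} = {}" unfolding Y_def W_def by auto
    have "card (fst ` A) = card (fst ` Y \<union> fst ` W) + card {c}"
      unfolding e by (rule card_Un_disjoint) (use fY d2 in auto)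
    also have "card (fst ` Y \<union> fst ` W) = card (fst ` Y) + card (fst ` W)"
      by (rule card_Un_disjoint) (use fY d1 in auto)
    finally show ?thesis by simp
  qed
  show "card (snd`A) + card (snd`Y \<inter> snd`W) = card (snd`Y) + card (snd`W)" if jW: "j \<in> snd ` W"
  proof -
    have e: "snd ` A = snd ` Y \<union> snd ` W" using Aeq jW by auto
    show ?thesis unfolding e using card_Un_Int[of "snd ` Y" "snd ` W"] fY by simp
  qed
  show "card A \<le> card (fst`Y) * card (snd`Y) + card (fst`W) * card (snd`W)"
    if h: "j \<in> snd ` Y" "c - d \<in> fst ` Y" "(c - d, j) \<notin> A"
  proof -
    have "(c - d, j) \<notin> Y" using h(3) unfolding Y_def by simp
    then have sY': "Y \<subseteq> (fst ` Y \<times> snd ` Y) - {(c - d, j)}" using sY by blast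
    have mem: "(c - d, j) \<in> fst ` Y \<times> snd ` Y" using h by simp
    have fin2: "finite (fst ` Y \<times> snd ` Y)" using fY by simp
    have "card Y \<le> card ((fst ` Y \<times> snd ` Y) - {(c - d, j)})"
      using card_mono[OF _ sY'] fin2 by simp
    also have "\<dots> = card (fst`Y) * card (snd`Y) - 1"
      using card_Diff_singleton[OF mem] by (simp add: card_cartesian_product)
    finally have "card Y \<le> card (fst`Y) * card (snd`Y) - 1" .
    moreover have "card (fst`Y) * card (snd`Y) \<ge> 1"
      using mem fin2 by (metis One_nat_def card_cartesian_product card_gt_0_iff empty_iff less_eq_Suc_le)
    ultimately show ?thesis using cA cW by linarith
  qed
qed

lemma arith1:
  fixes aY bW u t l :: int
  assumes "aY \<ge> 1" "bW \<ge> 1" "aY + bW = 2*l - 2" "u \<ge> 1" "u \<le> l" "t = l + 1 - u"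
  shows "aY*u + bW*t \<le> 2*l*l - 3*l + 1"
proof -
  define \<alpha> where "\<alpha> = aY - 1"
  define \<beta> where "\<beta> = u - 1"
  have e: "2*l*l - 3*l + 1 - (aY*u + bW*t) = \<alpha>*(l-1-\<beta>) + \<beta>*(2*l-4-\<alpha>)"
  proof -
    have b: "bW = 2*l - 2 - aY" using assms by simp
    show ?thesis unfolding b assms(6) \<alpha>_def \<beta>_def by (simp add: algebra_simps)
  qed
  have "\<alpha>*(l-1-\<beta>) \<ge> 0" using assms unfolding \<alpha>_def \<beta>_def by simp
  moreover have "\<beta>*(2*l-4-\<alpha>) \<ge> 0" using assms unfolding \<alpha>_def \<beta>_def by simp
  ultimately show ?thesis using e by linarith
qed

lemma arith2:
  fixes aY bW u t l :: int
  assumes "aY \<ge> 1" "bW \<ge> 1" "aY + bW = 2*l - 2" "u \<ge> 1" "u \<le> l - 1" "t = l + 1 - u"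
    "aY \<ge> 2 \<or> u \<ge> 2" "l \<ge> 3"
  shows "aY*u + bW*t \<le> 2*l*l - 3*l"
proof -
  define \<alpha> where "\<alpha> = aY - 1"
  define \<beta> where "\<beta> = u - 1"
  have e: "2*l*l - 3*l + 1 - (aY*u + bW*t) = \<alpha>*(l-1-\<beta>) + \<beta>*(2*l-4-\<alpha>)"
  proof -
    have b: "bW = 2*l - 2 - aY" using assms by simp
    show ?thesis unfolding b assms(6) \<alpha>_def \<beta>_def by (simp add: algebra_simps)
  qed
  have "\<alpha>*(l-1-\<beta>) \<ge> 0" using assms unfolding \<alpha>_def \<beta>_def by simp
  moreover have "\<beta>*(2*l-4-\<alpha>) \<ge> 0" using assms unfolding \<alpha>_def \<beta>_def by simp
  moreover have "\<alpha>*(l-1-\<beta>) \<ge> 1 \<or> \<beta>*(2*l-4-\<alpha>) \<ge> 1"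
  proof (cases "\<alpha> \<ge> 1")
    case True
    have "l-1-\<beta> \<ge> 1" using assms unfolding \<beta>_def by simp
    then have "\<alpha>*(l-1-\<beta>) \<ge> 1*1" using True by (intro mult_mono) auto
    then show ?thesis by simp
  next
    case False
    then have "\<alpha> = 0" "\<beta> \<ge> 1" using assms unfolding \<alpha>_def \<beta>_def by auto
    then have "\<beta>*(2*l-4-\<alpha>) \<ge> 1*1" using assms by (intro mult_mono) auto
    then show ?thesis by simp
  qed
  ultimately show ?thesis using e by linarith
qed

lemma finite_Lam: "finite (Lam L)"
  unfolding Lam_def by simp

lemma Lam0_sub: "Lam0 L \<subseteq> Lam L" unfolding Lam0_def by blast

lemma cl_sub: "cl L \<eta> \<subseteq> \<eta> \<inter> Lam0 L" unfolding cl_def by blast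

lemma finite_cl: "finite (cl L \<eta>)"
  using cl_sub Lam0_sub finite_Lam by (meson finite_subset inf.boundedE subsetI)

lemma nbr_sym: "nbr x y = nbr y x" unfolding nbr_def by (simp add: abs_minus_commute)

lemma nbr_right: "nbr x (fst x + 1, snd x)" unfolding nbr_def by simp
lemma nbr_up: "nbr x (fst x, snd x + 1)" unfolding nbr_def by simp

lemma hbonds_eq: "hbonds L \<eta> = hb (cl L \<eta>)"
proof -
  have "{x. x \<in> Lam0 L \<and> (fst x + 1, snd x) \<in> Lam0 L \<and> x \<in> \<eta> \<and> (fst x + 1, snd x) \<in> \<eta>}
        = {z \<in> cl L \<eta>. (fst z + 1, snd z) \<in> cl L \<eta>}"
  proof (rule set_eqI, rule iffI)
    fix x assume x: "x \<in> {x. x \<in> Lam0 L \<and> (fst x + 1, snd x) \<in> Lam0 L \<and> x \<in> \<eta> \<and> (fst x + 1, snd x) \<in> \<eta>}"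
    have n1: "nbr x (fst x + 1, snd x)" by (rule nbr_right)
    have n2: "nbr (fst x + 1, snd x) x" using n1 nbr_sym by blast
    show "x \<in> {z \<in> cl L \<eta>. (fst z + 1, snd z) \<in> cl L \<eta>}"
      using x n1 n2 unfolding cl_def by blast
  next
    fix x assume "x \<in> {z \<in> cl L \<eta>. (fst z + 1, snd z) \<in> cl L \<eta>}"
    then show "x \<in> {x. x \<in> Lam0 L \<and> (fst x + 1, snd x) \<in> Lam0 L \<and> x \<in> \<eta> \<and> (fst x + 1, snd x) \<in> \<eta>}"
      unfolding cl_def by blast
  qed
  then show ?thesis unfolding hbonds_def hb_def by simp
qed

lemma vbonds_eq: "vbonds L \<eta> = vb (cl L \<eta>)"
proof -
  have "{x. x \<in> Lam0 L \<and> (fst x, snd x + 1) \<in> Lam0 L \<and> x \<in> \<eta> \<and> (fst x, snd x + 1) \<in> \<eta>}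
        = {z \<in> cl L \<eta>. (fst z, snd z + 1) \<in> cl L \<eta>}"
  proof (rule set_eqI, rule iffI)
    fix x assume x: "x \<in> {x. x \<in> Lam0 L \<and> (fst x, snd x + 1) \<in> Lam0 L \<and> x \<in> \<eta> \<and> (fst x, snd x + 1) \<in> \<eta>}"
    have n1: "nbr x (fst x, snd x + 1)" by (rule nbr_up)
    have n2: "nbr (fst x, snd x + 1) x" using n1 nbr_sym by blast
    show "x \<in> {z \<in> cl L \<eta>. (fst z, snd z + 1) \<in> cl L \<eta>}"
      using x n1 n2 unfolding cl_def by blast
  next
    fix x assume "x \<in> {z \<in> cl L \<eta>. (fst z, snd z + 1) \<in> cl L \<eta>}"
    then show "x \<in> {x. x \<in> Lam0 L \<and> (fst x, snd x + 1) \<in> Lam0 L \<and> x \<in> \<eta> \<and> (fst x, snd x + 1) \<in> \<eta>}"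
      unfolding cl_def by blast
  qed
  then show ?thesis unfolding vbonds_def vb_def by simp
qed

lemma card_free_cl: "card (\<eta> \<inter> Lam L) = nfree L \<eta> + card (cl L \<eta>)"
proof -
  have e: "\<eta> \<inter> Lam L = free_particles L \<eta> \<union> cl L \<eta>"
    unfolding free_particles_def cl_def Lam0_def by blast
  have d: "free_particles L \<eta> \<inter> cl L \<eta> = {}"
    unfolding free_particles_def cl_def Lam0_def by blast
  have f: "finite (\<eta> \<inter> Lam L)" using finite_Lam by simp
  have f1: "finite (free_particles L \<eta>)" "finite (cl L \<eta>)" using f e by (metis finite_Un)+
  show ?thesis unfolding nfree_def e using card_Un_disjoint[OF f1 d] .
qed

lemma H_eq: "H L U1 U2 \<Delta> \<eta> = \<Delta> * (real (nfree L \<eta>) + real (card (cl L \<eta>)))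
     - U1 * real (hb (cl L \<eta>)) - U2 * real (vb (cl L \<eta>))"
  unfolding H_def hbonds_eq vbonds_eq card_free_cl by (simp add: algebra_simps)

lemma cl_local: "\<eta> \<inter> Lam0 L = \<eta>' \<inter> Lam0 L \<Longrightarrow> cl L \<eta> = cl L \<eta>'"
  unfolding cl_def by blast

lemma cl_nfree0: assumes "nfree L \<eta> = 0" "\<eta> \<subseteq> Lam L" shows "cl L \<eta> = \<eta>"
proof -
  have f: "finite (free_particles L \<eta>)" using finite_Lam
    by (metis (no_types, lifting) free_particles_def finite_Int mem_Collect_eq rev_finite_subset subsetI)
  have "free_particles L \<eta> = {}" using assms(1) f unfolding nfree_def by simp
  then have "\<eta> \<inter> Lam L = cl L \<eta>" using card_free_cl[of \<eta> L]
    unfolding free_particles_def cl_def Lam0_def by blast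
  then show ?thesis using assms(2) by blast
qed

lemma vlen_eq: "finite A \<Longrightarrow> vlen A = 2 * card (Ed 1 A)"
proof -
  assume f: "finite A"
  have "{x \<in> A. (fst x - 1, snd x) \<notin> A} = Ed (-1) A" unfolding Ed_def by simp
  then show ?thesis unfolding vlen_def using card_Ed_m1[OF f] by (simp add: Ed_def)
qed

lemma main_comb:
  fixes A A' :: "site set" and p q :: site and l :: nat
  assumes finA: "finite A"
    and clA: "\<forall>z\<in>A. \<exists>y\<in>A. nbr z y"
    and pA: "p \<in> A" and qA: "q \<notin> A" and pq: "nbr p q"
    and sub: "A' \<subseteq> insert q (A - {p})"
    and p2A: "p2 A = l" and p1A: "p1 A \<ge> 2*l - 1" and l4: "l \<ge> 4"
    and aA: "int (card A) \<le> int (p1 A) * (int l - 1) + 1"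
    and Q1: "card (Ed 1 A) \<le> l + 1"
    and Q2: "card (Ed 1 A) = l + 1 \<Longrightarrow> p1 A = 2*l - 1 \<and> int (card A) = int (p1 A) * (int l - 1) + 1"
    and p2': "p2 A' \<ge> l"
    and sum': "int (p1 A') + int (p2 A') = int (p1 A) + int l - 1"
    and NB1: "int (p1 A') + int (p2 A') = 3*int l - 2 \<Longrightarrow> \<not> (vac A' \<ge> pmin A' - 1)"
    and NB2: "int (p1 A') + int (p2 A') \<ge> 3*int l - 1 \<Longrightarrow> \<not> (p2 A' = l \<and> vac A' \<ge> pmax A' - 1)"
  shows "card A' < card A \<and> ((p2 A' = l + 1 \<and> p1 A' + 2 = p1 A) \<or> (p2 A' = l \<and> p1 A \<ge> 2*l))"
proof -
  define a where "a = card A"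
  define a' where "a' = card A'"
  define P1 where "P1 = p1 A"
  define P1' where "P1' = p1 A'"
  define P2' where "P2' = p2 A'"
  have finI: "finite (insert q (A - {p}))" using finA by simp
  have finA': "finite A'" using finite_subset[OF sub finI] .
  have cI: "card (insert q (A - {p})) = a"
  proof -
    have "card (A - {p}) = a - 1" using pA finA unfolding a_def by simp
    moreover have "a \<ge> 1" using pA finA unfolding a_def by (metis One_nat_def card_gt_0_iff empty_iff less_eq_Suc_le)
    moreover have "q \<notin> A - {p}" using qA by simp
    ultimately show ?thesis using finA by simp
  qed
  have a'le: "a' \<le> a" using card_mono[OF finI sub] cI unfolding a'_def by simp
  have rows': "snd ` A' \<subseteq> insert (snd q) (snd ` A)" using sub by auto
  have P2'le: "P2' \<le> l + 1"
  proof -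
    have "card (snd ` A') \<le> card (insert (snd q) (snd ` A))" using card_mono[OF _ rows'] finA by simp
    also have "\<dots> \<le> card (snd ` A) + 1" using card_insert_le_m1 by (simp add: card_insert_if finA)
    finally show ?thesis using p2A unfolding P2'_def p2_def by simp
  qed
  have vac': "vac A' = int P1' * int P2' - int a'" unfolding vac_def P1'_def P2'_def a'_def by simp
  have l4': "int l \<ge> 4" using l4 by simp
  have P1ge: "int P1 \<ge> 2 * int l - 1" using p1A l4 unfolding P1_def by linarith
  show ?thesis
  proof (cases "a' < a")
    case True
    have "P2' = l \<or> P2' = l + 1" using P2'le p2' unfolding P2'_def by linarith
    then show ?thesis
    proof
      assume h: "P2' = l + 1"
      then have "P1' + 2 = P1" using sum' unfolding P1'_def P2'_def P1_def by linarith
      then show ?thesis using True h unfolding a_def a'_def P1'_def P2'_def P1_def by simp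
    next
      assume h: "P2' = l"
      show ?thesis
      proof (cases "P1 \<ge> 2*l")
        case True
        then show ?thesis using \<open>a' < a\<close> h unfolding a_def a'_def P1'_def P2'_def P1_def by simp
      next
        case False
        then have e1: "int P1 = 2 * int l - 1" using P1ge by linarith
        then have e2: "int P1' = 2 * int l - 2" using sum' h unfolding P1'_def P2'_def P1_def by linarith
        have "int P1' + int P2' = 3 * int l - 2" using e2 h by simp
        then have "\<not> (vac A' \<ge> pmin A' - 1)" using NB1 unfolding P1'_def P2'_def by simp
        moreover have "pmin A' = int l" unfolding pmin_def using e2 h l4
          unfolding P1'_def P2'_def by simp
        ultimately have "int P1' * int P2' - int a' < int l - 1" using vac' by simp
        moreover have "int P1' * int P2' = 2 * int l * int l - 2 * int l"
        proof -
          have "int P1' * int P2' = (2 * int l - 2) * int l" using e2 h by simp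
          then show ?thesis by (simp add: algebra_simps)
        qed
        moreover have "int P1 * (int l - 1) = 2 * int l * int l - 3 * int l + 1" unfolding e1 by (simp add: algebra_simps)
        ultimately show ?thesis using aA \<open>a' < a\<close> unfolding a_def a'_def P1_def by linarith
      qed
    qed
  next
    case False
    then have aeq: "a' = a" using a'le by simp
    have A'eq: "A' = insert q (A - {p})"
      using card_subset_eq[OF finI sub] cI aeq unfolding a'_def by simp
    have cols': "fst ` A' = insert (fst q) (fst ` (A - {p}))" unfolding A'eq by simp
    have colsA: "fst ` A \<subseteq> insert (fst p) (fst ` (A - {p}))" by auto
    have finF: "finite (fst ` (A - {p}))" using finA by simp
    have c1: "P1 \<le> card (fst ` (A - {p})) + 1"
    proof -
      have "P1 \<le> card (insert (fst p) (fst ` (A - {p})))" unfolding P1_def p1_def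
        using card_mono[OF _ colsA] finF by simp
      also have "\<dots> \<le> card (fst ` (A - {p})) + 1" by (simp add: card_insert_if finF)
      finally show ?thesis .
    qed
    have c2: "card (fst ` (A - {p})) \<le> P1'" unfolding P1'_def p1_def cols'
      using card_mono[of "insert (fst q) (fst ` (A - {p}))" "fst ` (A - {p})"] finF by auto
    have hP2: "P2' = l"
    proof (rule ccontr)
      assume "P2' \<noteq> l"
      then have "P2' = l + 1" using P2'le p2' unfolding P2'_def by linarith
      then have "P1' + 2 = P1" using sum' unfolding P1'_def P2'_def P1_def by linarith
      then show False using c1 c2 by linarith
    qed
    have hP1: "int P1' = int P1 - 1" using sum' hP2 unfolding P1'_def P2'_def P1_def by linarith
    have alone: "\<forall>z\<in>A. fst z = fst p \<longrightarrow> z = p"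
    proof (rule ccontr)
      assume "\<not> (\<forall>z\<in>A. fst z = fst p \<longrightarrow> z = p)"
      then obtain z where z: "z \<in> A" "fst z = fst p" "z \<noteq> p" by blast
      then have "z \<in> A - {p}" by simp
      then have "fst z \<in> fst ` (A - {p})" by (rule imageI)
      then have "fst p \<in> fst ` (A - {p})" using z(2) by simp
      then have "insert (fst p) (fst ` (A - {p})) = fst ` (A - {p})" by (rule insert_absorb)
      then have "fst ` A \<subseteq> fst ` (A - {p})" using colsA by simp
      also have "\<dots> \<subseteq> fst ` A'" unfolding cols' by (rule subset_insertI)
      finally have "fst ` A \<subseteq> fst ` A'" .
      then have "P1 \<le> P1'" unfolding P1_def P1'_def p1_def by (rule card_mono[OF finite_imageI[OF finA']])
      then show False using hP1 by linarith
    qed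
    have fqin: "fst q \<in> fst ` (A - {p})"
    proof (rule ccontr)
      assume "fst q \<notin> fst ` (A - {p})"
      then have "P1' = card (fst ` (A - {p})) + 1" unfolding P1'_def p1_def cols' using finF by simp
      then show False using c1 hP1 by linarith
    qed
    then obtain u where u0: "u \<in> A - {p}" "fst q = fst u" by (rule imageE)
    then have u: "u \<in> A" "u \<noteq> p" "fst u = fst q" by simp_all
    have fqp: "fst q \<noteq> fst p"
    proof
      assume "fst q = fst p"
      then have "u = p" using alone u(1) u(3) by simp
      then show False using u(2) by simp
    qed
    define c where "c = fst p"
    define j where "j = snd p"
    define d where "d = fst p - fst q"
    have nb: "\<bar>fst p - fst q\<bar> + \<bar>snd p - snd q\<bar> = 1" using pq unfolding nbr_def by simp
    have ab1: "\<bar>fst p - fst q\<bar> \<ge> 1" using fqp by linarith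
    have ab2: "\<bar>snd p - snd q\<bar> \<ge> 0" by simp
    have ab3: "\<bar>snd p - snd q\<bar> = 0" using nb ab1 ab2 by linarith
    have sq: "snd q = j" using ab3 unfolding j_def by simp
    have ab4: "\<bar>fst p - fst q\<bar> = 1" using nb ab3 by linarith
    have dd: "d = 1 \<or> d = -1" using ab4 unfolding d_def by linarith
    have peq: "p = (c, j)" unfolding c_def j_def by simp
    have qeq: "q = (c - d, j)" using sq unfolding c_def d_def by (simp add: prod_eq_iff)
    have alone': "\<forall>z\<in>A. fst z = c \<longrightarrow> z = (c, j)" using alone peq unfolding c_def by simp
    have wA: "(c + d, j) \<in> A"
    proof -
      obtain z where z: "z \<in> A" "nbr p z" using clA pA by blast
      have zn: "\<bar>fst p - fst z\<bar> + \<bar>snd p - snd z\<bar> = 1" using z(2) unfolding nbr_def by simp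
      have "fst z \<noteq> c"
      proof
        assume "fst z = c"
        then have "z = p" using alone' z(1) peq by simp
        then show False using zn by simp
      qed
      then have sz: "snd z = j" and fz: "fst z = c + 1 \<or> fst z = c - 1" using zn unfolding c_def j_def by auto
      have "fst z \<noteq> c - d"
      proof
        assume "fst z = c - d"
        then have "z = q" using sz qeq by (simp add: prod_eq_iff)
        then show False using z(1) qA by simp
      qed
      then have "fst z = c + d" using fz dd by auto
      then have "z = (c + d, j)" using sz by (simp add: prod_eq_iff)
      then show ?thesis using z(1) by simp
    qed
    have qA': "(c - d, j) \<notin> A" using qA qeq by simp
    have pA': "(c, j) \<in> A" using pA peq by simp
    define Y where "Y = {z\<in>A. d * (fst z - c) < 0}"
    define W where "W = {z\<in>A. d * (fst z - c) > 0}"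
    have SR: "card (snd ` A) + card (snd ` Y \<inter> snd ` W) \<le> card (Ed d A)"
      using struct_runs[OF finA dd pA' alone' qA' wA] unfolding Y_def W_def by simp
    have EdR: "card (Ed d A) = card (Ed 1 A)" using dd card_Ed_m1[OF finA] by auto
    have SC1: "card A \<le> card (fst`Y) * card (snd`Y) + card (fst`W) * card (snd`W) + 1"
      using struct_count(1)[OF finA dd pA' alone'] unfolding Y_def W_def by simp
    have SC2: "card (fst ` A) = card (fst`Y) + card (fst`W) + 1"
      using struct_count(2)[OF finA dd pA' alone'] unfolding Y_def W_def by simp
    have wW: "(c + d, j) \<in> W" using wA dd unfolding W_def by auto
    then have jW: "j \<in> snd ` W" by force
    have SC3: "card (snd`A) + card (snd`Y \<inter> snd`W) = card (snd`Y) + card (snd`W)"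
      using struct_count(3)[OF finA dd pA' alone'] jW unfolding Y_def W_def by simp
    have SC4: "j \<in> snd ` Y \<Longrightarrow> c - d \<in> fst ` Y \<Longrightarrow>
          card A \<le> card (fst`Y) * card (snd`Y) + card (fst`W) * card (snd`W)"
      using struct_count(4)[OF finA dd pA' alone'] qA' unfolding Y_def W_def by simp
    have uY: "u \<in> Y" using u dd unfolding Y_def qeq c_def[symmetric] by auto
    have cdY: "c - d \<in> fst ` Y" using uY u qeq by force
    obtain v where v: "v \<in> A" "nbr u v" using clA u(1) by blast
    have vn: "\<bar>fst u - fst v\<bar> + \<bar>snd u - snd v\<bar> = 1" using v(2) unfolding nbr_def by simp
    have vu: "v \<noteq> u" using vn by auto
    have vY: "v \<in> Y"
    proof -
      have "fst v \<noteq> c"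
      proof
        assume "fst v = c"
        then have "v = (c, j)" using alone' v(1) by simp
        then have ee: "\<bar>d\<bar> + \<bar>snd u - j\<bar> = 1" using vn u qeq by simp
        have "\<bar>d\<bar> = 1" using dd by auto
        then have "snd u = j" using ee by simp
        then have "u = q" using u(3) qeq by (simp add: prod_eq_iff)
        then show False using u(1) qA by simp
      qed
      moreover have "fst u = c - d" using u(3) qeq by simp
      ultimately have "d * (fst v - c) < 0" using vn dd by auto
      then show ?thesis using v(1) unfolding Y_def by simp
    qed
    have finY: "finite Y" "finite W" using finA unfolding Y_def W_def by simp_all
    have cY2: "card Y \<ge> 2"
    proof -
      have "{u, v} \<subseteq> Y" using uY vY by simp
      then have "card {u, v} \<le> card Y" using card_mono finY by blast
      then show ?thesis using vu by simp
    qed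
    have sY: "Y \<subseteq> fst ` Y \<times> snd ` Y" by (auto intro: rev_image_eqI)
    have "card Y \<le> card (fst`Y) * card (snd`Y)"
      using card_mono[OF _ sY] finY by (simp add: card_cartesian_product)
    then have Y2: "card (fst`Y) \<ge> 2 \<or> card (snd`Y) \<ge> 2"
    proof -
      assume h: "card Y \<le> card (fst`Y) * card (snd`Y)"
      show ?thesis
      proof (rule ccontr)
        assume "\<not> (card (fst`Y) \<ge> 2 \<or> card (snd`Y) \<ge> 2)"
        then have "card (fst`Y) \<le> 1" "card (snd`Y) \<le> 1" by auto
        then have "card (fst`Y) * card (snd`Y) \<le> 1 * 1" by (intro mult_mono) auto
        then show False using h cY2 by simp
      qed
    qed
    have neY: "card (fst`Y) \<ge> 1" "card (snd`Y) \<ge> 1" using uY finY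
      by (metis One_nat_def card_gt_0_iff empty_iff finite_imageI image_eqI less_eq_Suc_le)+
    have neW: "card (fst`W) \<ge> 1" "card (snd`W) \<ge> 1" using wW finY
      by (metis One_nat_def card_gt_0_iff empty_iff finite_imageI image_eqI less_eq_Suc_le)+
    have sYA: "snd ` Y \<subseteq> snd ` A" "snd ` W \<subseteq> snd ` A" unfolding Y_def W_def by auto
    have uT: "card (snd`Y) \<le> l" "card (snd`W) \<le> l"
      using card_mono[OF _ sYA(1)] card_mono[OF _ sYA(2)] finA p2A unfolding p2_def by auto
    define aY where "aY = int (card (fst`Y))"
    define bW where "bW = int (card (fst`W))"
    define uu where "uu = int (card (snd`Y))"
    define tt where "tt = int (card (snd`W))"
    define SS where "SS = int (card (snd ` Y \<inter> snd ` W))"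
    have R1: "int l + SS \<le> int (card (Ed 1 A))" using SR EdR p2A unfolding SS_def p2_def by simp
    have R2: "int (card (Ed 1 A)) \<le> int l + 1" using Q1 by simp
    have eP1: "aY + bW + 1 = int P1" using SC2 unfolding P1_def p1_def aY_def bW_def by simp
    have eRows: "int l + SS = uu + tt" using SC3 p2A unfolding p2_def uu_def tt_def SS_def by simp
    have bnd1: "int a \<le> aY * uu + bW * tt + 1" using SC1 unfolding a_def aY_def bW_def uu_def tt_def
      by (metis of_nat_add of_nat_le_iff of_nat_mult of_nat_1)
    have NBa: "int a \<ge> (int P1 - 1) * (int l - 1) + 2"
    proof (cases "P1 \<ge> 2*l")
      case True
      then have s: "int P1' + int P2' \<ge> 3 * int l - 1" using hP1 hP2 by simp
      have "\<not> (vac A' \<ge> pmax A' - 1)" using NB2[OF s[unfolded P1'_def P2'_def]] hP2 unfolding P2'_def by simp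
      moreover have "pmax A' = int P1'" unfolding pmax_def using hP1 hP2 True
        unfolding P1'_def P2'_def by simp
      ultimately have "int P1' * int P2' - int a' < int P1' - 1" using vac' by simp
      then have "int P1' * int l - int a < int P1' - 1" using aeq hP2 by simp
      moreover have "int P1' * int l = int P1 * int l - int l" unfolding hP1 by (simp add: algebra_simps)
      moreover have "(int P1 - 1) * (int l - 1) + 2 = int P1 * int l - int P1 - int l + 3"
        by (simp add: algebra_simps)
      ultimately show ?thesis using hP1 by linarith
    next
      case False
      then have e1: "int P1 = 2 * int l - 1" using P1ge by linarith
      then have e2: "int P1' = 2 * int l - 2" using hP1 by simp
      have "int P1' + int P2' = 3 * int l - 2" using e2 hP2 by simp
      then have "\<not> (vac A' \<ge> pmin A' - 1)" using NB1 unfolding P1'_def P2'_def by simp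
      moreover have "pmin A' = int l" unfolding pmin_def using e2 hP2 l4
        unfolding P1'_def P2'_def by simp
      ultimately have "int P1' * int P2' - int a' < int l - 1" using vac' by simp
      moreover have "int P1' * int P2' = 2 * int l * int l - 2 * int l"
        proof -
          have "int P1' * int P2' = (2 * int l - 2) * int l" using e2 hP2 by simp
          then show ?thesis by (simp add: algebra_simps)
        qed
      moreover have "(int P1 - 1) * (int l - 1) + 2 = 2 * int l * int l - 4 * int l + 4" unfolding e1 by (simp add: algebra_simps)
      moreover have "int a' = int a" using aeq by simp
      ultimately show ?thesis using l4' by linarith
    qed
    have SS0: "SS \<ge> 0" unfolding SS_def by simp
    show ?thesis
    proof (cases "SS = 0")
      case True
      then have "uu \<le> int l - 1" "tt \<le> int l - 1" using eRows neY neW unfolding uu_def tt_def by linarith+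
      then have "aY * uu \<le> aY * (int l - 1)" "bW * tt \<le> bW * (int l - 1)"
        unfolding aY_def bW_def by (simp_all add: mult_left_mono)
      then have "int a \<le> (aY + bW) * (int l - 1) + 1" using bnd1 by (simp add: algebra_simps)
      moreover have eab: "aY + bW = int P1 - 1" using eP1 by linarith
      ultimately have "int a \<le> (int P1 - 1) * (int l - 1) + 1" by (simp only: eab)
      then show ?thesis using NBa by linarith
    next
      case False
      then have "SS \<ge> 1" using SS0 by simp
      then have "int (card (Ed 1 A)) = int l + 1" using R1 R2 by linarith
      then have "card (Ed 1 A) = l + 1" by simp
      from Q2[OF this] have t1: "P1 = 2*l - 1" and t2: "int a = int P1 * (int l - 1) + 1"
        unfolding P1_def a_def by auto
      have e1: "int P1 = 2 * int l - 1" using t1 l4 by simp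
      have aval: "int a = 2 * int l * int l - 3 * int l + 2" using t2 unfolding e1 by (simp add: algebra_simps)
      have SS1: "SS = 1" using R1 R2 \<open>SS \<ge> 1\<close> by linarith
      have abW: "aY + bW = 2 * int l - 2" using eP1 e1 by simp
      have t: "tt = int l + 1 - uu" using eRows SS1 by simp
      have g1: "aY \<ge> 1" "bW \<ge> 1" "uu \<ge> 1" using neY neW unfolding aY_def bW_def uu_def by simp_all
      have g2: "uu \<le> int l" using uT unfolding uu_def by simp
      show ?thesis
      proof (cases "j \<in> snd ` Y")
        case True
        have "int a \<le> aY * uu + bW * tt" using SC4[OF True cdY] unfolding a_def aY_def bW_def uu_def tt_def
          by (metis of_nat_add of_nat_le_iff of_nat_mult)
        moreover have "aY * uu + bW * tt \<le> 2 * int l * int l - 3 * int l + 1"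
          using arith1[OF g1(1) g1(2) abW g1(3) g2 t] .
        ultimately show ?thesis using aval by linarith
      next
        case False
        have "snd ` Y \<subseteq> snd ` A - {j}" using sYA(1) False by blast
        moreover have "j \<in> snd ` A" using pA' by force
        ultimately have "card (snd ` Y) \<le> l - 1" using finA p2A unfolding p2_def
          by (metis card_Diff_singleton card_mono finite_Diff finite_imageI)
        then have g3: "uu \<le> int l - 1" using l4 unfolding uu_def by simp
        have g4: "aY \<ge> 2 \<or> uu \<ge> 2" using Y2 unfolding aY_def uu_def by auto
        have "aY * uu + bW * tt \<le> 2 * int l * int l - 3 * int l"
          using arith2[OF g1(1) g1(2) abW g1(3) g3 t g4] l4 by simp
        then show ?thesis using aval bnd1 by linarith
      qed
    qed
  qed
qed

definition Gam :: "real \<Rightarrow> real \<Rightarrow> real \<Rightarrow> real \<Rightarrow> real" where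
  "Gam U1 U2 e l = U1 * l + 2 * U2 * l + U1 - U2 - 2 * e * l\<^sup>2 + 3 * e * l - 2 * e"

lemma E1:
  fixes U1 U2 e n a R C P1 l :: real
  assumes U2: "U2 > 0" and U1: "U1 > 2*U2" and e: "e > 0" and K: "e * (l - 1) < U2" and l4: "l \<ge> 4"
    and R: "R \<ge> l" and C: "C \<ge> P1" and P1: "P1 \<ge> 2*l - 1" and a: "a \<le> P1 * (l - 1) + 1"
    and n: "n \<ge> 0"
    and HG: "(U1 + U2 - e) * n + U1 * R + U2 * C - e * a \<le> Gam U1 U2 e l"
  shows "n < 1 \<and> R \<le> l + 1 \<and> (R = l + 1 \<longrightarrow> P1 = 2*l - 1 \<and> a = P1 * (l - 1) + 1)"
proof -
  define K where "K = U2 - e * (l - 1)"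
  have Kp: "K > 0" using K unfolding K_def by simp
  have eU2: "e < U2"
  proof -
    have "e * 1 \<le> e * (l - 1)" using e l4 by (intro mult_left_mono) auto
    then show ?thesis using K by simp
  qed
  define X where "X = U2 * (C - P1) + (P1 - (2*l - 1)) * K + e * (P1 * (l - 1) + 1 - a)"
  have idt: "(U1 + U2 - e) * n + U1 * R + U2 * C - e * a - Gam U1 U2 e l
      = (U1 + U2 - e) * n + U1 * (R - l - 1) + X"
    unfolding X_def K_def Gam_def power2_eq_square by (simp add: algebra_simps)
  have X1: "U2 * (C - P1) \<ge> 0" using U2 C by simp
  have X2: "(P1 - (2*l - 1)) * K \<ge> 0" using P1 Kp by simp
  have X3: "e * (P1 * (l - 1) + 1 - a) \<ge> 0" using e a by simp
  have Xn: "X \<ge> 0" unfolding X_def using X1 X2 X3 by linarith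
  have main: "(U1 + U2 - e) * n + U1 * (R - l - 1) + X \<le> 0" using idt HG by linarith
  have n1: "n < 1"
  proof (rule ccontr)
    assume "\<not> n < 1"
    then have "(U1 + U2 - e) * n \<ge> (U1 + U2 - e) * 1" using eU2 U1 U2 by (intro mult_left_mono) auto
    moreover have "U1 * (R - l - 1) \<ge> U1 * (-1)" using R U1 U2 by (intro mult_left_mono) auto
    ultimately have "(U1 + U2 - e) * n \<ge> U1 + U2 - e" "U1 * (R - l - 1) \<ge> - U1" by simp_all
    then show False using main Xn eU2 by linarith
  qed
  have nn: "(U1 + U2 - e) * n \<ge> 0" using n eU2 U1 U2 by simp
  have R1: "R \<le> l + 1"
  proof (rule ccontr)
    assume "\<not> R \<le> l + 1"
    then have "U1 * (R - l - 1) > 0" using U1 U2 by simp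
    then show False using main Xn nn by linarith
  qed
  have R2: "P1 = 2*l - 1 \<and> a = P1 * (l - 1) + 1" if Rl: "R = l + 1"
  proof -
    have "X \<le> 0" using main nn Rl by simp
    then have z1: "(P1 - (2*l - 1)) * K = 0" and z2: "e * (P1 * (l - 1) + 1 - a) = 0"
      using X1 X2 X3 Xn unfolding X_def by linarith+
    have "P1 - (2*l - 1) = 0" using z1 Kp by simp
    moreover have "P1 * (l - 1) + 1 - a = 0" using z2 e by simp
    ultimately show ?thesis by simp
  qed
  show ?thesis using n1 R1 R2 by blast
qed


lemma E2:
  fixes U1 U2 e n' a' a R' C' P1 l :: real
  assumes U2: "U2 > 0" and U1: "U1 > 2*U2" and e: "e > 0" and K: "e * (l - 1) < U2" and l4: "l \<ge> 4"
    and n: "n' \<ge> 1" and aa: "a' + n' = a" and a: "a \<le> P1 * (l - 1) + 1" and P1: "P1 \<ge> 2*l - 1"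
    and cs: "(R' \<ge> l + 1 \<and> C' \<ge> P1 - 2) \<or> (R' \<ge> l \<and> C' \<ge> P1 - 1 \<and> P1 \<ge> 2*l)"
  shows "(U1 + U2 - e) * n' + U1 * R' + U2 * C' - e * a' > Gam U1 U2 e l"
proof -
  define K where "K = U2 - e * (l - 1)"
  have Kp: "K > 0" using K unfolding K_def by simp
  define Y where "Y = U2 * C' - e * a' - U2 * (2*l - 1) + e * (2*l*l - 3*l + 2)"
  have idt: "(U1 + U2 - e) * n' + U1 * R' + U2 * C' - e * a' - Gam U1 U2 e l
      = (U1 + U2 - e) * n' + U1 * (R' - l - 1) + Y"
    unfolding Y_def Gam_def power2_eq_square by (simp add: algebra_simps)
  have ea: "e * a' \<le> e * (P1 * (l - 1) + 1 - n')" using e aa a by (intro mult_left_mono) auto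
  have nn0: "(U1 + U2) * n' \<ge> (U1 + U2) * 1" using n U1 U2 by (intro mult_left_mono) auto
  then have nn: "(U1 + U2) * n' \<ge> U1 + U2" by simp
  show ?thesis
    using cs
  proof
    assume h: "R' \<ge> l + 1 \<and> C' \<ge> P1 - 2"
    have "U2 * C' \<ge> U2 * (P1 - 2)" using h U2 by (intro mult_left_mono) auto
    then have "Y \<ge> U2 * (P1 - 2) - e * (P1 * (l - 1) + 1 - n') - U2 * (2*l - 1) + e * (2*l*l - 3*l + 2)"
      using ea unfolding Y_def by linarith
    moreover have "U2 * (P1 - 2) - e * (P1 * (l - 1) + 1 - n') - U2 * (2*l - 1) + e * (2*l*l - 3*l + 2)
        = (P1 - 2*l + 1) * K - 2 * U2 + e * n'" unfolding K_def by (simp add: algebra_simps)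
    moreover have "(P1 - 2*l + 1) * K \<ge> 0" using P1 Kp by simp
    moreover have "U1 * (R' - l - 1) \<ge> 0" using h U1 U2 by simp
    moreover have "(U1 + U2 - e) * n' + e * n' = (U1 + U2) * n'" by (simp add: algebra_simps)
    ultimately show ?thesis using idt nn U1 U2 by linarith
  next
    assume h: "R' \<ge> l \<and> C' \<ge> P1 - 1 \<and> P1 \<ge> 2*l"
    have "U2 * C' \<ge> U2 * (P1 - 1)" using h U2 by (intro mult_left_mono) auto
    then have "Y \<ge> U2 * (P1 - 1) - e * (P1 * (l - 1) + 1 - n') - U2 * (2*l - 1) + e * (2*l*l - 3*l + 2)"
      using ea unfolding Y_def by linarith
    moreover have "U2 * (P1 - 1) - e * (P1 * (l - 1) + 1 - n') - U2 * (2*l - 1) + e * (2*l*l - 3*l + 2)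
        = (P1 - 2*l + 1) * K - U2 + e * n'" unfolding K_def by (simp add: algebra_simps)
    moreover have "(P1 - 2*l + 1) * K \<ge> K"
    proof -
      have "(P1 - 2*l + 1) * K \<ge> 1 * K" using h Kp by (intro mult_right_mono) auto
      then show ?thesis by simp
    qed
    moreover have "U1 * (R' - l - 1) \<ge> - U1"
    proof -
      have "U1 * (R' - l - 1) \<ge> U1 * (-1)" using h U1 U2 by (intro mult_left_mono) auto
      then show ?thesis by simp
    qed
    moreover have "(U1 + U2 - e) * n' + e * n' = (U1 + U2) * n'" by (simp add: algebra_simps)
    ultimately show ?thesis using idt nn U1 U2 Kp by linarith
  qed
qed

lemma H_form: "H L U1 U2 \<Delta> \<eta> = (U1 + U2 - eps U1 U2 \<Delta>) * real (nfree L \<eta>)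
   + U1 * real (card (Ed 1 (cl L \<eta>))) + U2 * real (card (Ev (cl L \<eta>))) - eps U1 U2 \<Delta> * real (card (cl L \<eta>))"
proof -
  have f: "finite (cl L \<eta>)" by (rule finite_cl)
  have a1: "real (card (cl L \<eta>)) = real (hb (cl L \<eta>)) + real (card (Ed 1 (cl L \<eta>)))"
    using card_hb[OF f] by simp
  have a2: "real (card (cl L \<eta>)) = real (vb (cl L \<eta>)) + real (card (Ev (cl L \<eta>)))"
    using card_vb[OF f] by simp
  have h1: "real (hb (cl L \<eta>)) = real (card (cl L \<eta>)) - real (card (Ed 1 (cl L \<eta>)))" using a1 by simp
  have h2: "real (vb (cl L \<eta>)) = real (card (cl L \<eta>)) - real (card (Ev (cl L \<eta>)))" using a2 by simp
  show ?thesis unfolding H_eq eps_def h1 h2 by (simp add: algebra_simps)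
qed

lemma move_cases:
  assumes "is_move L \<eta>b \<eta>"
  shows "cl L \<eta> = cl L \<eta>b \<or> (\<exists>p q. p \<in> \<eta>b \<and> q \<notin> \<eta>b \<and> p \<in> Lam L \<and> q \<in> Lam L \<and> nbr p q \<and> \<eta> = insert q (\<eta>b - {p}))"
proof -
  have ne: "\<eta> \<noteq> \<eta>b" using assms unfolding is_move_def by simp
  consider (sw) x y where "x \<in> Lam L" "y \<in> Lam L" "nbr x y" "\<eta> = swap x y \<eta>b"
    | (rm) x where "x \<in> bdry L" "\<eta> = \<eta>b - {x}"
    | (ins) x where "x \<in> bdry L" "\<eta> = insert x \<eta>b"
    using assms unfolding is_move_def by blast
  then show ?thesis
  proof cases
    case sw
    show ?thesis
    proof (cases "x \<in> \<eta>b")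
      case True
      show ?thesis
      proof (cases "y \<in> \<eta>b")
        case True
        then have "\<eta> = \<eta>b" using sw \<open>x \<in> \<eta>b\<close> unfolding swap_def by auto
        then show ?thesis using ne by simp
      next
        case False
        have "\<eta> = insert y (\<eta>b - {x})" using sw \<open>x \<in> \<eta>b\<close> False unfolding swap_def by auto
        then show ?thesis using sw \<open>x \<in> \<eta>b\<close> False by blast
      qed
    next
      case False
      show ?thesis
      proof (cases "y \<in> \<eta>b")
        case True
        have "\<eta> = insert x (\<eta>b - {y})" using sw \<open>x \<notin> \<eta>b\<close> True unfolding swap_def by auto
        moreover have "nbr y x" using sw(3) nbr_sym by blast
        ultimately show ?thesis using sw \<open>x \<notin> \<eta>b\<close> True by blast
      next
        case False
        then have "\<eta> = \<eta>b" using sw \<open>x \<notin> \<eta>b\<close> unfolding swap_def by auto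
        then show ?thesis using ne by simp
      qed
    qed
  next
    case rm
    have "x \<notin> Lam0 L" using rm unfolding Lam0_def by simp
    then have "\<eta> \<inter> Lam0 L = \<eta>b \<inter> Lam0 L" using rm by blast
    then show ?thesis using cl_local by blast
  next
    case ins
    have "x \<notin> Lam0 L" using ins unfolding Lam0_def by simp
    then have "\<eta> \<inter> Lam0 L = \<eta>b \<inter> Lam0 L" using ins by blast
    then show ?thesis using cl_local by blast
  qed
qed

theorem proposition4p4:
  fixes U1 U2 :: real
  assumes "U2 > 0" and "U1 > 2 * U2"
  shows "\<exists>\<epsilon>0 > 0. \<forall>(L::nat) (\<Delta>::real) \<eta>b \<eta>.
     \<Delta> > 0 \<longrightarrow> 0 < eps U1 U2 \<Delta> \<longrightarrow> eps U1 U2 \<Delta> < \<epsilon>0 \<longrightarrow>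
     U2 / eps U1 U2 \<Delta> \<notin> \<nat> \<longrightarrow>
     is_move L \<eta>b \<eta> \<longrightarrow> \<eta>b \<in> Bset L (lstar U1 U2 \<Delta>) \<longrightarrow>
     ssz (cl L \<eta>) - ssz (cl L \<eta>b) = -1 \<longrightarrow>
     p2 (cl L \<eta>b) \<ge> lstar U1 U2 \<Delta> \<longrightarrow>
       \<eta> \<in> Bset L (lstar U1 U2 \<Delta>)
     \<or> (\<eta>b \<in> P1 L (lstar U1 U2 \<Delta>) \<and> H L U1 U2 \<Delta> \<eta>b = Gamma U1 U2 \<Delta> \<and> \<eta> \<in> Bset L (lstar U1 U2 \<Delta>))
     \<or> (\<eta> \<notin> Bset L (lstar U1 U2 \<Delta>) \<and> max (H L U1 U2 \<Delta> \<eta>b) (H L U1 U2 \<Delta> \<eta>) > Gamma U1 U2 \<Delta> \<and>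
        \<eta>b \<notin> P1 L (lstar U1 U2 \<Delta>) \<union> P2 L (lstar U1 U2 \<Delta>))"
proof -
  have U2p: "U2 > 0" and U1p: "U1 > 2 * U2" using assms by simp_all
  define \<epsilon>0 where "\<epsilon>0 = U2 / 3"
  have e0p: "\<epsilon>0 > 0" using U2p unfolding \<epsilon>0_def by simp
  have "\<forall>(L::nat) (\<Delta>::real) \<eta>b \<eta>.
     \<Delta> > 0 \<longrightarrow> 0 < eps U1 U2 \<Delta> \<longrightarrow> eps U1 U2 \<Delta> < \<epsilon>0 \<longrightarrow>
     U2 / eps U1 U2 \<Delta> \<notin> \<nat> \<longrightarrow>
     is_move L \<eta>b \<eta> \<longrightarrow> \<eta>b \<in> Bset L (lstar U1 U2 \<Delta>) \<longrightarrow>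
     ssz (cl L \<eta>) - ssz (cl L \<eta>b) = -1 \<longrightarrow>
     p2 (cl L \<eta>b) \<ge> lstar U1 U2 \<Delta> \<longrightarrow>
       \<eta> \<in> Bset L (lstar U1 U2 \<Delta>)
     \<or> (\<eta>b \<in> P1 L (lstar U1 U2 \<Delta>) \<and> H L U1 U2 \<Delta> \<eta>b = Gamma U1 U2 \<Delta> \<and> \<eta> \<in> Bset L (lstar U1 U2 \<Delta>))
     \<or> (\<eta> \<notin> Bset L (lstar U1 U2 \<Delta>) \<and> max (H L U1 U2 \<Delta> \<eta>b) (H L U1 U2 \<Delta> \<eta>) > Gamma U1 U2 \<Delta> \<and>
        \<eta>b \<notin> P1 L (lstar U1 U2 \<Delta>) \<union> P2 L (lstar U1 U2 \<Delta>))"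
  proof (intro allI impI)
    fix L :: nat and \<Delta> :: real and \<eta>b \<eta> :: "site set"
    assume Dp: "\<Delta> > 0" and ep: "0 < eps U1 U2 \<Delta>" and e0: "eps U1 U2 \<Delta> < \<epsilon>0"
      and nN: "U2 / eps U1 U2 \<Delta> \<notin> \<nat>" and mv: "is_move L \<eta>b \<eta>"
      and Bb: "\<eta>b \<in> Bset L (lstar U1 U2 \<Delta>)" and ds: "ssz (cl L \<eta>) - ssz (cl L \<eta>b) = -1"
      and p2b: "p2 (cl L \<eta>b) \<ge> lstar U1 U2 \<Delta>"
    define e where "e = eps U1 U2 \<Delta>"
    define l where "l = lstar U1 U2 \<Delta>"
    define A where "A = cl L \<eta>b"
    define A' where "A' = cl L \<eta>"
    have e_pos: "e > 0" using ep unfolding e_def .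
    have x3: "U2 / e > 3" using e0 e_pos unfolding \<epsilon>0_def e_def[symmetric] by (simp add: field_simps)
    have lr: "real l = of_int \<lceil>U2 / e\<rceil>"
    proof -
      have "(3::real) < of_int \<lceil>U2 / e\<rceil>" using x3 le_of_int_ceiling[of "U2/e"] by linarith
      then have "\<lceil>U2 / e\<rceil> \<ge> 0" by simp
      then show ?thesis unfolding l_def lstar_def e_def[symmetric] by simp
    qed
    have lge: "real l \<ge> U2 / e" and llt: "real l - 1 < U2 / e" using ceiling_correct[of "U2/e"] lr by simp_all
    have l4r: "real l \<ge> 4"
    proof -
      have "real l > 3" using lge x3 by simp
      then have "l > 3" by simp
      then show ?thesis by simp
    qed
    have l4: "l \<ge> 4" using l4r by simp
    have eK: "e * (real l - 1) < U2"
    proof -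
      have "e * (real l - 1) < e * (U2 / e)" using llt e_pos by (intro mult_strict_left_mono) auto
      then show ?thesis using e_pos by simp
    qed
    have Gm: "Gamma U1 U2 \<Delta> = Gam U1 U2 e (real l)"
      unfolding Gamma_def Gam_def Let_def e_def l_def by simp
    have Del: "\<Delta> = U1 + U2 - e" unfolding e_def eps_def by simp
    show "\<eta> \<in> Bset L (lstar U1 U2 \<Delta>)
     \<or> (\<eta>b \<in> P1 L (lstar U1 U2 \<Delta>) \<and> H L U1 U2 \<Delta> \<eta>b = Gamma U1 U2 \<Delta> \<and> \<eta> \<in> Bset L (lstar U1 U2 \<Delta>))
     \<or> (\<eta> \<notin> Bset L (lstar U1 U2 \<Delta>) \<and> max (H L U1 U2 \<Delta> \<eta>b) (H L U1 U2 \<Delta> \<eta>) > Gamma U1 U2 \<Delta> \<and>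
        \<eta>b \<notin> P1 L (lstar U1 U2 \<Delta>) \<union> P2 L (lstar U1 U2 \<Delta>))"
    proof (cases "\<eta> \<in> Bset L (lstar U1 U2 \<Delta>)")
      case True
      then show ?thesis by simp
    next
      case False
      have Bb': "ssz A \<le> 3 * int l - 1 - 2 \<or> (ssz A \<ge> 3 * int l - 1 - 1 \<and> int (p2 A) \<le> int l - 1)
        \<or> (ssz A = 3 * int l - 1 - 1 \<and> p2 A \<ge> l \<and> vac A \<ge> pmin A - 1)
        \<or> (ssz A \<ge> 3 * int l - 1 \<and> p2 A = l \<and> vac A \<ge> pmax A - 1)"
        using Bb unfolding Bset_def A_def l_def by (simp add: Let_def)
      have nB: "\<not> (ssz A' \<le> 3 * int l - 1 - 2 \<or> (ssz A' \<ge> 3 * int l - 1 - 1 \<and> int (p2 A') \<le> int l - 1)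
        \<or> (ssz A' = 3 * int l - 1 - 1 \<and> p2 A' \<ge> l \<and> vac A' \<ge> pmin A' - 1)
        \<or> (ssz A' \<ge> 3 * int l - 1 \<and> p2 A' = l \<and> vac A' \<ge> pmax A' - 1))"
        using False unfolding Bset_def A'_def l_def by (simp add: Let_def)
      have ss': "ssz A' = ssz A - 1" using ds unfolding A_def A'_def by simp
      have sA: "ssz A = int (p1 A) + int (p2 A)" and sA': "ssz A' = int (p1 A') + int (p2 A')"
        unfolding ssz_def by simp_all
      have p2bl: "p2 A \<ge> l" using p2b unfolding A_def l_def .
      have sge: "ssz A \<ge> 3 * int l - 1"
      proof (rule ccontr)
        assume "\<not> ssz A \<ge> 3 * int l - 1"
        then have "ssz A' \<le> 3 * int l - 1 - 2" using ss' by simp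
        then show False using nB by blast
      qed
      have c4: "ssz A \<ge> 3 * int l - 1 \<and> p2 A = l \<and> vac A \<ge> pmax A - 1"
      proof -
        have i1: "\<not> ssz A \<le> 3 * int l - 1 - 2" using sge by linarith
        have i2: "\<not> int (p2 A) \<le> int l - 1" using p2bl by linarith
        have i3: "\<not> ssz A = 3 * int l - 1 - 1" using sge by linarith
        show ?thesis using Bb' i1 i2 i3 by blast
      qed
      have p2A: "p2 A = l" and vA: "vac A \<ge> pmax A - 1" using c4 by simp_all
      have p2A': "p2 A' \<ge> l"
      proof (rule ccontr)
        assume "\<not> p2 A' \<ge> l"
        then have "int (p2 A') \<le> int l - 1" by simp
        moreover have "ssz A' \<ge> 3 * int l - 1 - 1" using ss' sge by simp
        ultimately show False using nB by blast
      qed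
      have NB1: "int (p1 A') + int (p2 A') = 3*int l - 2 \<Longrightarrow> \<not> (vac A' \<ge> pmin A' - 1)"
        using nB sA' p2A' by auto
      have NB2: "int (p1 A') + int (p2 A') \<ge> 3*int l - 1 \<Longrightarrow> \<not> (p2 A' = l \<and> vac A' \<ge> pmax A' - 1)"
        using nB sA' by auto
      have sum': "int (p1 A') + int (p2 A') = int (p1 A) + int l - 1" using ss' sA sA' p2A by simp
      have p1A: "p1 A \<ge> 2*l - 1" using sge sA p2A by simp
      have p1Ai: "int (p1 A) \<ge> 2 * int l - 1" using sge sA p2A by simp
      have pmaxA: "pmax A = int (p1 A)" unfolding pmax_def using p1A p2A l4 by simp
      have aA: "int (card A) \<le> int (p1 A) * (int l - 1) + 1"
      proof -
        have "int (p1 A) * int l - int (card A) \<ge> int (p1 A) - 1" using vA pmaxA p2A unfolding vac_def by simp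
        then show ?thesis by (simp add: algebra_simps)
      qed
      have sub0: "\<eta>b \<subseteq> Lam L" using mv unfolding is_move_def by simp
      have finb: "finite \<eta>b" using finite_subset[OF sub0 finite_Lam] .
      obtain p q where pq: "p \<in> \<eta>b" "q \<notin> \<eta>b" "p \<in> Lam L" "q \<in> Lam L" "nbr p q" "\<eta> = insert q (\<eta>b - {p})"
      proof -
        have "cl L \<eta> \<noteq> cl L \<eta>b" using ds by auto
        then show ?thesis using move_cases[OF mv] that by blast
      qed
      have subL: "\<eta> \<subseteq> Lam L" using pq sub0 by auto
      have cardeq: "card \<eta> = card \<eta>b"
      proof -
        have "card (\<eta>b - {p}) = card \<eta>b - 1" using pq finb by simp
        moreover have "card \<eta>b \<ge> 1" using pq finb by (metis One_nat_def card_gt_0_iff empty_iff less_eq_Suc_le)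
        moreover have "q \<notin> \<eta>b - {p}" using pq by simp
        ultimately show ?thesis using pq finb by simp
      qed
      have nsum: "nfree L \<eta> + card A' = nfree L \<eta>b + card A"
      proof -
        have "card (\<eta> \<inter> Lam L) = card (\<eta>b \<inter> Lam L)" using subL sub0 cardeq
          by (simp add: Int_absorb2)
        then show ?thesis using card_free_cl[of \<eta> L] card_free_cl[of \<eta>b L] unfolding A_def A'_def by simp
      qed
      have finA: "finite A" unfolding A_def by (rule finite_cl)
      have MC: "card A' < card A \<and> ((p2 A' = l + 1 \<and> p1 A' + 2 = p1 A) \<or> (p2 A' = l \<and> p1 A \<ge> 2*l))"
        if Q0a: "nfree L \<eta>b = 0" and Q0b: "card (Ed 1 A) \<le> l + 1"
          and Q0c: "card (Ed 1 A) = l+1 \<Longrightarrow> p1 A = 2*l - 1 \<and> int (card A) = int (p1 A) * (int l - 1) + 1"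
      proof -
        have Aeq: "A = \<eta>b" unfolding A_def using cl_nfree0[OF Q0a sub0] .
        have clA: "\<forall>z\<in>A. \<exists>y\<in>A. nbr z y"
        proof
          fix z assume "z \<in> A"
          then have "z \<in> cl L \<eta>b" unfolding A_def .
          then obtain y where "y \<in> \<eta>b" "nbr z y" unfolding cl_def by blast
          then show "\<exists>y\<in>A. nbr z y" using Aeq by blast
        qed
        have sub: "A' \<subseteq> insert q (A - {p})"
          using cl_sub[of L \<eta>] pq(6) Aeq unfolding A'_def by blast
        show ?thesis
          using main_comb[OF finA clA _ _ pq(5) sub p2A p1A l4 aA Q0b Q0c p2A' sum' NB1 NB2] pq(1,2) Aeq
          by blast
      qed
      have notP2: "\<eta>b \<notin> P2 L l"
      proof
        assume "\<eta>b \<in> P2 L l"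
        then have "p1 A = 2*l - 2" "p2 A = l" unfolding P2_def A_def by simp_all
        then show False using sge sA l4 by simp
      qed
      have notP1: "\<eta>b \<notin> P1 L l"
      proof
        assume P: "\<eta>b \<in> P1 L l"
        then have n0: "nfree L \<eta>b = 0" and v0: "vac A = 2 * int l - 2" and g0: "g2' A = 1"
          and p10: "p1 A = 2*l - 1" unfolding P1_def A_def by simp_all
        have "real (vlen A) / 2 - real (p2 A) = 1" using g0 unfolding g2'_def g2_def .
        then have "real (vlen A) = 2 * real l + 2" using p2A by simp
        then have "vlen A = 2 * l + 2" by linarith
        then have R: "card (Ed 1 A) = l + 1" using vlen_eq[OF finA] by simp
        have p10i: "int (p1 A) = 2 * int l - 1" using p10 l4 by simp
        have ca: "int (card A) = int (p1 A) * int l - (2 * int l - 2)" using v0 p2A unfolding vac_def by simp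
        have ca2: "int (card A) = int (p1 A) * (int l - 1) + 1"
          using ca unfolding p10i by (simp add: algebra_simps)
        have M: "card A' < card A \<and> ((p2 A' = l + 1 \<and> p1 A' + 2 = p1 A) \<or> (p2 A' = l \<and> p1 A \<ge> 2*l))"
          using MC[OF n0] R p10 ca2 by simp
        then have h1: "p2 A' = l + 1" "p1 A' + 2 = p1 A" using p10 l4 by auto
        have p1'i: "int (p1 A') = 2 * int l - 3" using h1 p10 l4 by simp
        have "int (p1 A') + int (p2 A') = 3 * int l - 2" using p1'i h1 by simp
        then have nv: "\<not> (vac A' \<ge> pmin A' - 1)" using NB1 by simp
        have "pmin A' = int l + 1" unfolding pmin_def using h1 p1'i l4 by simp
        then have "int (p1 A') * int (p2 A') - int (card A') < int l" using nv unfolding vac_def by simp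
        moreover have "int (p1 A') * int (p2 A') = 2 * int l * int l - int l - 3"
        proof -
          have "int (p1 A') * int (p2 A') = (2 * int l - 3) * (int l + 1)" using p1'i h1 by simp
          then show ?thesis by (simp add: algebra_simps)
        qed
        moreover have "int (card A) = 2 * int l * int l - 3 * int l + 2"
          using ca2 unfolding p10i by (simp add: algebra_simps)
        moreover have "int (card A') < int (card A)" using M by simp
        ultimately show False using l4 by linarith
      qed
      have HG: "max (H L U1 U2 \<Delta> \<eta>b) (H L U1 U2 \<Delta> \<eta>) > Gamma U1 U2 \<Delta>"
      proof (rule ccontr)
        assume "\<not> max (H L U1 U2 \<Delta> \<eta>b) (H L U1 U2 \<Delta> \<eta>) > Gamma U1 U2 \<Delta>"
        then have Hb: "H L U1 U2 \<Delta> \<eta>b \<le> Gamma U1 U2 \<Delta>" and Hn: "H L U1 U2 \<Delta> \<eta> \<le> Gamma U1 U2 \<Delta>" by simp_all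
        have Rl: "card (Ed 1 A) \<ge> l" using rows_le[OF finA] p2A unfolding p2_def by simp
        have Cl: "card (Ev A) \<ge> p1 A" using cols_le[OF finA] unfolding p1_def by simp
        have E: "real (nfree L \<eta>b) < 1 \<and> real (card (Ed 1 A)) \<le> real l + 1 \<and>
            (real (card (Ed 1 A)) = real l + 1 \<longrightarrow> real (p1 A) = 2 * real l - 1 \<and>
              real (card A) = real (p1 A) * (real l - 1) + 1)"
        proof (rule E1[OF U2p U1p e_pos eK l4r])
          show "real (card (Ed 1 A)) \<ge> real l" using Rl by simp
          show "real (card (Ev A)) \<ge> real (p1 A)" using Cl by simp
          show "real (p1 A) \<ge> 2 * real l - 1" using p1Ai by linarith
          show "real (card A) \<le> real (p1 A) * (real l - 1) + 1"
          proof -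
            have "real_of_int (int (card A)) \<le> real_of_int (int (p1 A) * (int l - 1) + 1)"
              using aA by (simp only: of_int_le_iff)
            then show ?thesis by simp
          qed
          show "real (nfree L \<eta>b) \<ge> 0" by simp
          show "(U1 + U2 - e) * real (nfree L \<eta>b) + U1 * real (card (Ed 1 A)) + U2 * real (card (Ev A))
              - e * real (card A) \<le> Gam U1 U2 e (real l)"
            using Hb unfolding H_form Gm A_def e_def by simp
        qed
        have n0: "nfree L \<eta>b = 0" using E by simp
        have Q0b: "card (Ed 1 A) \<le> l + 1" using E by linarith
        have Q0c: "p1 A = 2*l - 1 \<and> int (card A) = int (p1 A) * (int l - 1) + 1" if "card (Ed 1 A) = l+1"
        proof -
          have "real (card (Ed 1 A)) = real l + 1" using that by simp
          then have r: "real (p1 A) = 2 * real l - 1" "real (card A) = real (p1 A) * (real l - 1) + 1"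
            using E by auto
          have "p1 A = 2*l - 1" using r(1) l4 by linarith
          moreover have "real_of_int (int (card A)) = real_of_int (int (p1 A) * (int l - 1) + 1)"
            using r(2) by simp
          ultimately show ?thesis by (simp only: of_int_eq_iff)
        qed
        have M: "card A' < card A \<and> ((p2 A' = l + 1 \<and> p1 A' + 2 = p1 A) \<or> (p2 A' = l \<and> p1 A \<ge> 2*l))"
          using MC[OF n0 Q0b Q0c] by blast
        have nn: "nfree L \<eta> + card A' = card A" using nsum n0 by simp
        have finA': "finite A'" unfolding A'_def by (rule finite_cl)
        have Rl': "card (Ed 1 A') \<ge> p2 A'" using rows_le[OF finA'] unfolding p2_def by simp
        have Cl': "card (Ev A') \<ge> p1 A'" using cols_le[OF finA'] unfolding p1_def by simp
        have "(U1 + U2 - e) * real (nfree L \<eta>) + U1 * real (card (Ed 1 A')) + U2 * real (card (Ev A'))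
              - e * real (card A') > Gam U1 U2 e (real l)"
        proof (rule E2[OF U2p U1p e_pos eK l4r])
          show "real (nfree L \<eta>) \<ge> 1" using M nn by simp
          show "real (card A') + real (nfree L \<eta>) = real (card A)" using nn by simp
          show "real (card A) \<le> real (p1 A) * (real l - 1) + 1"
          proof -
            have "real_of_int (int (card A)) \<le> real_of_int (int (p1 A) * (int l - 1) + 1)"
              using aA by (simp only: of_int_le_iff)
            then show ?thesis by simp
          qed
          show "real (p1 A) \<ge> 2 * real l - 1" using p1Ai by linarith
          show "(real (card (Ed 1 A')) \<ge> real l + 1 \<and> real (card (Ev A')) \<ge> real (p1 A) - 2) \<or>
                (real (card (Ed 1 A')) \<ge> real l \<and> real (card (Ev A')) \<ge> real (p1 A) - 1 \<and> real (p1 A) \<ge> 2 * real l)"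
          proof (cases "p2 A' = l + 1 \<and> p1 A' + 2 = p1 A")
            case True
            then show ?thesis using Rl' Cl' by auto
          next
            case False
            then have h: "p2 A' = l" "p1 A \<ge> 2*l" using M by auto
            have "int (p1 A') = int (p1 A) - 1" using sum' h by simp
            then have "real (p1 A') = real (p1 A) - 1" by linarith
            then show ?thesis using Rl' Cl' h by auto
          qed
        qed
        then have "H L U1 U2 \<Delta> \<eta> > Gamma U1 U2 \<Delta>" unfolding H_form Gm A'_def e_def by simp
        then show False using Hn by simp
      qed
      show ?thesis using False HG notP1 notP2 unfolding l_def by simp
    qed
  qed
  then show ?thesis using e0p by blast
qed

end
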